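(* For any integer $k$ with $0\le k\le 2$, any code-tuple $F$ that is both $2$-bit delay decodable and extendable, any $i\in[F]$ and $s\in\mathcal{S}$, we have $|\bar{\mathcal{P}}^k_{F,i}(f_i(s))|+|\mathcal{P}^2_{F,\tau_i(s)}|\le 4$.
   Context: $\mathcal{S}$ is a finite source alphabet with $|\mathcal{S}|\ge 2$ and $\mathcal{C}=\{0,1\}$; $\mathcal{A}^k,\mathcal{A}^{\ast},\mathcal{A}^{+}$ are sequences of length $k$, finite length, positive finite length; $\lambda$ empty sequence; $\preceq$ prefix, $\prec$ proper prefix; $\mathrm{suff}(x_1\cdots x_n)=x_2\cdots x_n$. A code-tuple $F$ with $m\ge1$ code tables consists of maps $f_i:\mathcal{S}\to\mathcal{C}^{\ast}$ and $\tau_i:\mathcal{S}\to\{0,\dots,m-1\}$ for $i\in[F]=\{0,\dots,m-1\}$. $f_i^{\ast}(\lambda)=\lambda$, $f_i^{\ast}(\pmb{x})=f_i(x_1)f^{\ast}_{\tau_i(x_1)}(\mathrm{suff}(\pmb{x}))$. For integer $k\ge0$, $\pmb{b}\in\mathcal{C}^{\ast}$: $\mathcal{P}^k_{F,i}(\pmb{b})$ is the set of $\pmb{c}\in\mathcal{C}^k$ such that some $\pmb{x}=x_1\cdots x_n\in\mathcal{S}^{+}$ has $f_i^{\ast}(\pmb{x})\succeq\pmb{b}\pmb{c}$ and $f_i(x_1)\succeq\pmb{b}$; $\bar{\mathcal{P}}^k_{F,i}(\pmb{b})$ the same with $f_i(x_1)\succ\pmb{b}$; $\mathcal{P}^k_{F,i}=\mathcal{P}^k_{F,i}(\lambda)$.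 $F$ is $k$-bit delay decodable if $\mathcal{P}^k_{F,\tau_i(s)}\cap\bar{\mathcal{P}}^k_{F,i}(f_i(s))=\emptyset$ for all $i,s$, and $\mathcal{P}^k_{F,\tau_i(s)}\cap\mathcal{P}^k_{F,\tau_i(s')}=\emptyset$ whenever $s\ne s'$, $f_i(s)=f_i(s')$. $F$ is extendable if $\mathcal{P}^1_{F,i}\ne\emptyset$ for all $i\in[F]$. *)

theory Defs
  imports Main "HOL-Library.Sublist"
begin

text \<open>A code-tuple with m code tables over source alphabet 's and code alphabet
  {0,1} (rendered as bool).  Code tables are indexed by [F] = {0..<m};
  f i s is the codeword f_i(s), tau i s the next table tau_i(s).\<close>

definition code_tuple :: "nat \<Rightarrow> (nat \<Rightarrow> 's \<Rightarrow> bool list) \<Rightarrow> (nat \<Rightarrow> 's \<Rightarrow> nat) \<Rightarrow> bool" where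
  "code_tuple m f tau \<longleftrightarrow> m \<ge> 1 \<and> (\<forall>i<m. \<forall>s. tau i s < m)"

fun fstar :: "(nat \<Rightarrow> 's \<Rightarrow> bool list) \<Rightarrow> (nat \<Rightarrow> 's \<Rightarrow> nat) \<Rightarrow> nat \<Rightarrow> 's list \<Rightarrow> bool list" where
  "fstar f tau i [] = []"
| "fstar f tau i (x # xs) = f i x @ fstar f tau (tau i x) xs"

definition PF :: "(nat \<Rightarrow> 's \<Rightarrow> bool list) \<Rightarrow> (nat \<Rightarrow> 's \<Rightarrow> nat) \<Rightarrow> nat \<Rightarrow> nat \<Rightarrow> bool list \<Rightarrow> bool list set" where
  "PF f tau k i b = {c. length c = k \<and>
     (\<exists>x xs. prefix (b @ c) (fstar f tau i (x # xs)) \<and> prefix b (f i x))}"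

definition PFbar :: "(nat \<Rightarrow> 's \<Rightarrow> bool list) \<Rightarrow> (nat \<Rightarrow> 's \<Rightarrow> nat) \<Rightarrow> nat \<Rightarrow> nat \<Rightarrow> bool list \<Rightarrow> bool list set" where
  "PFbar f tau k i b = {c. length c = k \<and>
     (\<exists>x xs. prefix (b @ c) (fstar f tau i (x # xs)) \<and> strict_prefix b (f i x))}"

definition k_bit_delay_decodable :: "nat \<Rightarrow> nat \<Rightarrow> (nat \<Rightarrow> 's \<Rightarrow> bool list) \<Rightarrow> (nat \<Rightarrow> 's \<Rightarrow> nat) \<Rightarrow> bool" where
  "k_bit_delay_decodable k m f tau \<longleftrightarrow>
     (\<forall>i<m. \<forall>s. PF f tau k (tau i s) [] \<inter> PFbar f tau k i (f i s) = {}) \<and>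
     (\<forall>i<m. \<forall>s s'. s \<noteq> s' \<and> f i s = f i s' \<longrightarrow>
        PF f tau k (tau i s) [] \<inter> PF f tau k (tau i s') [] = {})"

definition extendable :: "nat \<Rightarrow> (nat \<Rightarrow> 's \<Rightarrow> bool list) \<Rightarrow> (nat \<Rightarrow> 's \<Rightarrow> nat) \<Rightarrow> bool" where
  "extendable m f tau \<longleftrightarrow> (\<forall>i<m. PF f tau 1 i [] \<noteq> {})"

end

theory Submission
  imports Defs
begin

fun endt :: "(nat \<Rightarrow> 's \<Rightarrow> nat) \<Rightarrow> nat \<Rightarrow> 's list \<Rightarrow> nat" where
  "endt tau j [] = j"
| "endt tau j (x # xs) = endt tau (tau j x) xs"

lemma fstar_append: "fstar f tau j (xs @ ys) = fstar f tau j xs @ fstar f tau (endt tau j xs) ys"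
  by (induction xs arbitrary: j) auto

lemma endt_lt: "code_tuple m f tau \<Longrightarrow> j < m \<Longrightarrow> endt tau j xs < m"
  by (induction xs arbitrary: j) (auto simp: code_tuple_def)

lemma long_ext:
  assumes "code_tuple m f tau" "extendable m f tau" "j < m"
  shows "\<exists>ys. n \<le> length (fstar f tau j ys)"
  using assms(3)
proof (induction n arbitrary: j)
  case 0 then show ?case by auto
next
  case (Suc n)
  from assms(2) Suc.prems obtain c where "c \<in> PF f tau 1 j []" unfolding extendable_def by blast
  then obtain x xs where "length c = 1" "prefix c (fstar f tau j (x # xs))" unfolding PF_def by auto
  hence ne: "1 \<le> length (fstar f tau j (x # xs))" using prefix_length_le by fastforce
  have "endt tau j (x#xs) < m" using endt_lt[OF assms(1) Suc.prems] .
  from Suc.IH[OF this] obtain ys where "n \<le> length (fstar f tau (endt tau j (x#xs)) ys)" by blast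
  hence "Suc n \<le> length (fstar f tau j ((x#xs) @ ys))" using ne by (simp only: fstar_append length_append)
  then show ?case by blast
qed

theorem lemma8:
  fixes m :: nat and f :: "nat \<Rightarrow> 's::finite \<Rightarrow> bool list" and tau :: "nat \<Rightarrow> 's \<Rightarrow> nat"
    and k i :: nat and s :: 's
  assumes "card (UNIV :: 's set) \<ge> 2"
    and "code_tuple m f tau"
    and "k \<le> 2"
    and "k_bit_delay_decodable 2 m f tau"
    and "extendable m f tau"
    and "i < m"
  shows "card (PFbar f tau k i (f i s)) + card (PF f tau 2 (tau i s) []) \<le> 4"
proof -
  let ?b = "f i s"
  let ?A = "PFbar f tau k i ?b"
  let ?A2 = "PFbar f tau 2 i ?b"
  let ?B = "PF f tau 2 (tau i s) []"
  let ?L = "{c::bool list. length c = 2}"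
  have finL: "finite ?L" using finite_lists_length_eq[of "UNIV::bool set" 2] by simp
  have cardL: "card ?L = 4" using card_lists_length_eq[of "UNIV::bool set" 2] by simp
  have A2L: "?A2 \<subseteq> ?L" and BL: "?B \<subseteq> ?L" unfolding PFbar_def PF_def by auto
  have disj: "?B \<inter> ?A2 = {}" using assms(4) assms(6) unfolding k_bit_delay_decodable_def by blast
  have sub: "?A \<subseteq> take k ` ?A2"
  proof
    fix c assume "c \<in> ?A"
    then obtain x xs where lc: "length c = k" and p: "prefix (?b @ c) (fstar f tau i (x # xs))"
      and sp: "strict_prefix ?b (f i x)" unfolding PFbar_def by auto
    have "endt tau i (x#xs) < m" using endt_lt[OF assms(2) assms(6)] .
    from long_ext[OF assms(2) assms(5) this] obtain ys where
      ly: "2 \<le> length (fstar f tau (endt tau i (x#xs)) ys)" by blast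
    define w where "w = fstar f tau i (x # (xs @ ys))"
    have wdef: "w = fstar f tau i (x#xs) @ fstar f tau (endt tau i (x#xs)) ys"
      unfolding w_def using fstar_append[of f tau i "x#xs" ys] by simp
    have pw: "prefix (?b @ c) w" using p wdef prefix_prefix by metis
    have lw: "length ?b + 2 \<le> length w" using prefix_length_le[OF p] ly wdef by simp
    define c' where "c' = take 2 (drop (length ?b) w)"
    have lc': "length c' = 2" using lw unfolding c'_def by simp
    obtain r where r: "w = ?b @ c @ r" using pw by (auto simp: prefix_def)
    have "prefix (?b @ c') w" unfolding c'_def using r
      by (metis append_eq_conv_conj append_take_drop_id prefix_def take_add)
    hence "c' \<in> ?A2" using lc' sp unfolding PFbar_def w_def by blast
    moreover have "take k c' = c" unfolding c'_def using r lc assms(3) by simp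
    ultimately show "c \<in> take k ` ?A2" by force
  qed
  have fA2: "finite ?A2" using A2L finL finite_subset by blast
  have "card ?A \<le> card (take k ` ?A2)" using sub card_mono fA2 by blast
  also have "\<dots> \<le> card ?A2" using card_image_le fA2 by blast
  finally have "card ?A + card ?B \<le> card ?A2 + card ?B" by simp
  also have "\<dots> = card (?A2 \<union> ?B)" using disj fA2 BL finL finite_subset
    by (metis card_Un_disjoint inf_commute)
  also have "\<dots> \<le> 4" using cardL A2L BL finL card_mono by (metis Un_least)
  finally show ?thesis .
qed

end
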